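(* Let $x, y, a, b$ be positive integers. Then there exists an amicable pair of lattice parallelograms, one with side lengths $x$ and $y$ and the other with side lengths $a$ and $b$, if and only if both $x^2y^2 - 4(a+b)^2$ and $a^2b^2 - 4(x+y)^2$ are squares of integers (zero allowed).
   Context: A lattice parallelogram is a parallelogram all of whose vertices lie on the integer lattice $\mathbb{Z}^2$. Two polygons form an amicable pair if the area of each equals the perimeter of the other (the two polygons are not required to be distinct). A parallelogram "with side lengths $x$ and $y$" has two sides of length $x$ and two sides of length $y$. *)

theory Defs
  imports Complex_Main
begin

type_synonym lpoint = "int \<times> int"

definition seglen :: "lpoint \<Rightarrow> lpoint \<Rightarrow> real" where
  "seglen P Q = sqrt (real_of_int ((fst Q - fst P)^2 + (snd Q - snd P)^2))"

definition lattice_parallelogram :: "lpoint \<Rightarrow> lpoint \<Rightarrow> lpoint \<Rightarrow> lpoint \<Rightarrow> bool" where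
  "lattice_parallelogram A B C D \<longleftrightarrow>
     fst A + fst C = fst B + fst D \<and> snd A + snd C = snd B + snd D \<and>
     (fst B - fst A) * (snd D - snd A) - (snd B - snd A) * (fst D - fst A) \<noteq> 0"

definition par_area :: "lpoint \<Rightarrow> lpoint \<Rightarrow> lpoint \<Rightarrow> lpoint \<Rightarrow> real" where
  "par_area A B C D =
     real_of_int \<bar>(fst B - fst A) * (snd D - snd A) - (snd B - snd A) * (fst D - fst A)\<bar>"

definition par_perimeter :: "lpoint \<Rightarrow> lpoint \<Rightarrow> lpoint \<Rightarrow> lpoint \<Rightarrow> real" where
  "par_perimeter A B C D = seglen A B + seglen B C + seglen C D + seglen D A"

definition has_side_lengths :: "lpoint \<Rightarrow> lpoint \<Rightarrow> lpoint \<Rightarrow> lpoint \<Rightarrow> real \<Rightarrow> real \<Rightarrow> bool" where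
  "has_side_lengths A B C D x y \<longleftrightarrow>
     (seglen A B = x \<and> seglen B C = y \<and> seglen C D = x \<and> seglen D A = y) \<or>
     (seglen A B = y \<and> seglen B C = x \<and> seglen C D = y \<and> seglen D A = x)"

definition amicable_par ::
  "lpoint \<Rightarrow> lpoint \<Rightarrow> lpoint \<Rightarrow> lpoint \<Rightarrow> lpoint \<Rightarrow> lpoint \<Rightarrow> lpoint \<Rightarrow> lpoint \<Rightarrow> bool" where
  "amicable_par A B C D E F G H \<longleftrightarrow>
     par_area A B C D = par_perimeter E F G H \<and> par_area E F G H = par_perimeter A B C D"

end

theory Submission imports Defs "HOL-Computational_Algebra.Primes" begin

datatype gi = GG (gre: int) (gim: int)

instantiation gi :: comm_ring_1
begin
definition "0 = GG 0 0"
definition "1 = GG 1 0"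
definition "a + b = GG (gre a + gre b) (gim a + gim b)"
definition "a - b = GG (gre a - gre b) (gim a - gim b)"
definition "- a = GG (- gre a) (- gim a)"
definition "a * b = GG (gre a * gre b - gim a * gim b) (gre a * gim b + gim a * gre b)"
instance
  by standard (auto simp: zero_gi_def one_gi_def plus_gi_def minus_gi_def uminus_gi_def
      times_gi_def gi.expand algebra_simps)
end

lemma gi_simps[simp]:
  "gre 0 = 0" "gim 0 = 0" "gre 1 = 1" "gim 1 = 0"
  "gre (a + b) = gre a + gre b" "gim (a + b) = gim a + gim b"
  "gre (a - b) = gre a - gre b" "gim (a - b) = gim a - gim b"
  "gre (a * b) = gre a * gre b - gim a * gim b" "gim (a * b) = gre a * gim b + gim a * gre b"
  by (simp_all add: zero_gi_def one_gi_def plus_gi_def minus_gi_def times_gi_def)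

definition N :: "gi \<Rightarrow> int" where "N z = gre z ^ 2 + gim z ^ 2"
definition cj :: "gi \<Rightarrow> gi" where "cj z = GG (gre z) (- gim z)"

lemma gi_eqI: "gre a = gre b \<Longrightarrow> gim a = gim b \<Longrightarrow> a = b"
  by (simp add: gi.expand)

lemma N_mult: "N (a * b) = N a * N b"
  by (simp add: N_def algebra_simps power2_eq_square)

lemma N_nonneg: "N a \<ge> 0" by (simp add: N_def)

lemma N_one[simp]: "N 1 = 1" by (simp add: N_def)

lemma N_G: "N (GG a b) = a^2 + b^2" by (simp add: N_def)

lemma cj_mult: "cj (a * b) = cj a * cj b"
  by (rule gi_eqI) (simp_all add: cj_def)
lemma cj_add: "cj (a + b) = cj a + cj b"
  by (rule gi_eqI) (simp_all add: cj_def)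
lemma mult_cj: "a * cj a = GG (N a) 0"
  by (rule gi_eqI) (simp_all add: cj_def N_def power2_eq_square)
lemma cj_real: "cj (GG p 0) = GG p 0" by (simp add: cj_def)
lemma G_mult_real: "GG p 0 * GG q 0 = GG (p*q) 0"
  by (rule gi_eqI) simp_all
lemma N_dvd: "a dvd b \<Longrightarrow> N a dvd N b"
  by (auto simp: N_mult)

lemma N_zero_iff: "N a = 0 \<longleftrightarrow> a = 0"
  by (auto simp: N_def gi.expand zero_gi_def)

lemma div_round:
  fixes c n :: int assumes "n > 0"
  shows "\<exists>q. 4 * (c - n*q)^2 \<le> n^2"
proof -
  define q where "q = (2*c + n) div (2*n)"
  define r where "r = (2*c + n) mod (2*n)"
  have "2*c + n = 2*n*q + r" unfolding q_def r_def by simp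
  moreover have "0 \<le> r" "r < 2*n" unfolding r_def using assms by simp_all
  ultimately have e: "2*(c - n*q) = r - n" by (simp add: algebra_simps)
  have "\<bar>2*(c - n*q)\<bar> \<le> n" unfolding e using \<open>0 \<le> r\<close> \<open>r < 2*n\<close> by linarith
  hence "(2*(c - n*q))^2 \<le> n^2"
    by (metis abs_le_square_iff abs_of_pos assms)
  moreover have "4*(c-n*q)^2 = (2*(c-n*q))^2" by (simp only: power_mult_distrib) simp
  ultimately show ?thesis by metis
qed

lemma gi_division:
  assumes "b \<noteq> 0"
  shows "\<exists>q r. a = b * q + r \<and> N r < N b"
proof -
  define n where "n = N b"
  have n: "n > 0" using assms N_nonneg[of b] N_zero_iff[of b] unfolding n_def by linarith
  define c where "c = a * cj b"
  obtain q1 where q1: "4 * (gre c - n*q1)^2 \<le> n^2" using div_round n by blast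
  obtain q2 where q2: "4 * (gim c - n*q2)^2 \<le> n^2" using div_round n by blast
  define q where "q = GG q1 q2"
  define r where "r = a - b * q"
  have "r * cj b = c - GG n 0 * q"
    unfolding r_def c_def n_def using mult_cj[of b]
    by (metis (no_types, lifting) left_diff_distrib mult.assoc mult.commute)
  hence "N (r * cj b) = (gre c - n*q1)^2 + (gim c - n*q2)^2"
    by (simp add: N_def q_def)
  moreover have "N (cj b) = n" by (simp add: N_def cj_def n_def)
  ultimately have "4 * (N r * n) \<le> 2 * n^2" using q1 q2 by (simp add: N_mult)
  hence "2 * N r \<le> n" using n by (simp add: power2_eq_square)
  hence "N r < n" using n by linarith
  moreover have "a = b * q + r" by (simp add: r_def)
  ultimately show ?thesis unfolding n_def by blast
qed

lemma gi_bezout: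
  fixes a b :: gi shows "\<exists>d s t. d dvd a \<and> d dvd b \<and> d = a * s + b * t"
proof (induction "nat (N b)" arbitrary: a b rule: less_induct)
  case less
  show ?case
  proof (cases "b = 0")
    case True thus ?thesis by (intro exI[of _ a] exI[of _ 1] exI[of _ 0]) simp
  next
    case False
    then obtain q r where qr: "a = b * q + r" "N r < N b" using gi_division by blast
    have "nat (N r) < nat (N b)" using qr(2) N_nonneg[of r] by simp
    then obtain d s t where d: "d dvd b" "d dvd r" "d = b * s + r * t" using less by blast
    have "d dvd a" using d qr(1) by simp
    moreover have "d = a * t + b * (s - q * t)" using d(3) qr(1) by (simp add: algebra_simps)
    ultimately show ?thesis using d by blast
  qed
qed


lemma dvd_p2_cases:
  fixes p k :: int
  assumes "prime p" "k \<ge> 0" "k dvd p^2"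
  shows "k = 1 \<or> k = p \<or> k = p^2"
proof -
  obtain m where "m \<le> 2" "normalize k = p^m" using divides_primepow[OF assms(1,3)] by blast
  moreover have "normalize k = k" using assms(2) by simp
  ultimately show ?thesis by (cases m) (auto simp: le_Suc_eq numeral_2_eq_2)
qed

lemma G_lemma:
  fixes p :: int
  assumes p: "prime p" and "p dvd N z"
  shows "\<exists>\<rho>. \<rho> dvd z \<and> \<rho> dvd GG p 0 \<and> (N \<rho> = p \<or> N \<rho> = p^2)"
proof -
  obtain d s t where d: "d dvd z" "d dvd GG p 0" "d = z * s + GG p 0 * t" using gi_bezout by blast
  obtain e where e: "GG p 0 = d * e" using d(2) by blast
  have "p^2 = N (GG p 0)" by (simp add: N_G)
  also have "\<dots> = N d * N e" by (simp add: e N_mult)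
  finally have "p^2 = N d * N e" .
  hence "N d dvd p^2" by simp
  hence c: "N d = 1 \<or> N d = p \<or> N d = p^2" using dvd_p2_cases[OF p N_nonneg] by blast
  have "N d \<noteq> 1"
  proof
    assume "N d = 1"
    obtain k where k: "N z = p * k" using assms(2) by blast
    have "GG 1 0 = d * cj d" using \<open>N d = 1\<close> by (simp add: mult_cj)
    also have "\<dots> = (z * s + GG p 0 * t) * (cj z * cj s + GG p 0 * cj t)"
      using d(3) by (simp add: cj_add cj_mult cj_real)
    also have "\<dots> = (z * cj z) * (s * cj s) + GG p 0 * (z * s * cj t + t * cj z * cj s + GG p 0 * t * cj t)"
      by (simp add: algebra_simps)
    also have "z * cj z = GG p 0 * GG k 0" using k by (simp add: mult_cj G_mult_real)
    finally have "GG 1 0 = GG p 0 * (GG k 0 * (s * cj s) + (z * s * cj t + t * cj z * cj s + GG p 0 * t * cj t))"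
      by (simp add: algebra_simps)
    hence "N (GG p 0) dvd N (GG 1 0)" by (metis N_dvd dvd_triv_left)
    hence "p^2 dvd 1" by (simp add: N_G)
    hence "p dvd 1" by (meson dvd_power dvd_trans pos2)
    thus False using p by (simp add: not_prime_unit)
  qed
  thus ?thesis using c d by blast
qed

lemma L_lemma:
  fixes p :: int
  assumes p: "prime p" and "p^2 dvd N w"
  shows "\<exists>\<delta>. \<delta> dvd w \<and> N \<delta> = p^2"
proof -
  have pp: "p > 0" using p prime_gt_0_int by blast
  have "p dvd N w" using assms(2) by (metis dvd_power dvd_trans pos2)
  then obtain \<rho>1 where r1: "\<rho>1 dvd w" "N \<rho>1 = p \<or> N \<rho>1 = p^2" using G_lemma[OF p] by blast
  show ?thesis
  proof (cases "N \<rho>1 = p^2")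
    case True thus ?thesis using r1 by blast
  next
    case False
    hence n1: "N \<rho>1 = p" using r1 by blast
    obtain w1 where w1: "w = \<rho>1 * w1" using r1 by blast
    have "p * p dvd p * N w1" using assms(2) w1 n1 by (simp add: N_mult power2_eq_square)
    hence "p dvd N w1" using pp by simp
    then obtain \<rho>2 where r2: "\<rho>2 dvd w1" "\<rho>2 dvd GG p 0" "N \<rho>2 = p \<or> N \<rho>2 = p^2"
      using G_lemma[OF p] by blast
    show ?thesis
    proof (cases "N \<rho>2 = p")
      case True
      have "\<rho>1 * \<rho>2 dvd w" using w1 r2(1) by (simp add: mult_dvd_mono)
      moreover have "N (\<rho>1 * \<rho>2) = p^2" using True n1 by (simp add: N_mult power2_eq_square)
      ultimately show ?thesis by blast
    next
      case False
      hence n2: "N \<rho>2 = p^2" using r2 by blast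
      obtain e where e: "GG p 0 = \<rho>2 * e" using r2(2) by blast
      have "p^2 = N (GG p 0)" by (simp add: N_G)
      also have "\<dots> = p^2 * N e" by (simp add: e N_mult n2)
      finally have "p^2 = p^2 * N e" .
      hence "N e = 1" using pp by simp
      hence ee: "e * cj e = 1" by (simp add: mult_cj one_gi_def)
      obtain q where q: "w1 = \<rho>2 * q" using r2(1) by blast
      have "w1 = \<rho>2 * e * cj e * q" using q ee by (metis mult.assoc mult.right_neutral)
      also have "\<dots> = GG p 0 * (cj e * q)" using e by simp
      finally have "GG p 0 dvd w" using w1 by simp
      moreover have "N (GG p 0) = p^2" by (simp add: N_G)
      ultimately show ?thesis by blast
    qed
  qed
qed

lemma fac_lemma:
  fixes x y :: int
  assumes "x > 0" "N w = x^2 * y^2"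
  shows "\<exists>d e. w = d * e \<and> N d = x^2"
  using assms
proof (induction "nat x" arbitrary: x w rule: less_induct)
  case less
  show ?case
  proof (cases "x = 1")
    case True thus ?thesis by (intro exI[of _ 1] exI[of _ w]) simp
  next
    case False
    hence "\<not> is_unit x" using less.prems(1) by simp
    then obtain p where p: "p dvd x" "prime p" using prime_divisor_exists[of x] less.prems(1) by auto
    have pp: "p > 1" using p(2) prime_gt_1_int by blast
    obtain x' where x': "x = p * x'" using p(1) by blast
    have x'p: "x' > 0" using x' pp less.prems(1) by (simp add: zero_less_mult_iff)
    have lt: "nat x' < nat x" using x' pp x'p by simp
    have Nw: "N w = p^2 * (x'^2 * y^2)" using less.prems(2) x' by (simp add: power_mult_distrib)
    hence "p^2 dvd N w" by simp
    then obtain \<delta> where dl: "\<delta> dvd w" "N \<delta> = p^2" using L_lemma[OF p(2)] by blast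
    obtain w' where w': "w = \<delta> * w'" using dl by blast
    have "p^2 * N w' = p^2 * (x'^2 * y^2)"
      using Nw w' dl(2) by (simp add: N_mult)
    hence "N w' = x'^2 * y^2" using pp by simp
    then obtain d' e' where de: "w' = d' * e'" "N d' = x'^2" using less.hyps[OF lt x'p] by blast
    have "w = (\<delta> * d') * e'" using w' de by simp
    moreover have "N (\<delta> * d') = x^2" using dl de x' by (simp add: N_mult power_mult_distrib)
    ultimately show ?thesis by blast
  qed
qed

lemma construct:
  fixes x y k m :: int
  assumes "x > 0" "y > 0" "x^2 * y^2 - k^2 = m^2"
  shows "\<exists>u1 u2 v1 v2. u1^2 + u2^2 = x^2 \<and> v1^2 + v2^2 = y^2 \<and> u1 * v2 - u2 * v1 = k"
proof -
  have "N (GG m k) = x^2 * y^2" using assms(3) by (simp add: N_G)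
  then obtain d e where de: "GG m k = d * e" "N d = x^2" using fac_lemma assms(1) by blast
  have "x^2 * N e = x^2 * y^2" using de \<open>N (GG m k) = _\<close> by (simp add: N_mult)
  hence ne: "N e = y^2" using assms(1) by simp
  have "k = gre d * gim e + gim d * gre e" using de(1) by (metis gi.sel(2) gi_simps(10))
  thus ?thesis using de(2) ne
    by (intro exI[of _ "gre d"] exI[of _ "- gim d"] exI[of _ "gre e"] exI[of _ "gim e"]) (simp add: N_def)
qed


lemma seglen_of:
  assumes "(fst Q - fst P)^2 + (snd Q - snd P)^2 = s^2" "0 \<le> s"
  shows "seglen P Q = real_of_int s"
  unfolding seglen_def assms(1) using assms(2) by simp

lemma seglen_sq:
  assumes "seglen P Q = real_of_int s" "0 < s"
  shows "(fst Q - fst P)^2 + (snd Q - snd P)^2 = s^2"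
proof -
  define t where "t = (fst Q - fst P)^2 + (snd Q - snd P)^2"
  have t0: "t \<ge> 0" unfolding t_def by simp
  have "sqrt (real_of_int t) = real_of_int s" using assms(1) unfolding seglen_def t_def .
  hence "real_of_int t = (real_of_int s)^2" using t0 by (metis of_int_0_le_iff real_sqrt_pow2)
  hence "t = s^2" by (metis of_int_eq_iff of_int_power)
  thus ?thesis unfolding t_def .
qed

lemma perim:
  "has_side_lengths A B C D (real_of_int x) (real_of_int y) \<Longrightarrow>
   par_perimeter A B C D = real_of_int (2*(x+y))"
  by (auto simp: has_side_lengths_def par_perimeter_def)

lemma fwd:
  fixes x y k :: int
  assumes h: "has_side_lengths A B C D (real_of_int x) (real_of_int y)" and "x > 0" "y > 0"
    and ar: "par_area A B C D = real_of_int k"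
  shows "\<exists>m. x^2*y^2 - k^2 = m^2"
proof -
  define u1 where "u1 = fst B - fst A"
  define u2 where "u2 = snd B - snd A"
  define v1 where "v1 = fst D - fst A"
  define v2 where "v2 = snd D - snd A"
  have sw: "(fst A - fst D)^2 + (snd A - snd D)^2 = v1^2 + v2^2"
    unfolding v1_def v2_def by (simp add: power2_commute)
  have "(u1^2 + u2^2) * (v1^2 + v2^2) = x^2 * y^2"
    using h assms(2,3) unfolding has_side_lengths_def
    by (metis seglen_sq sw u1_def u2_def mult.commute)
  moreover have "\<bar>u1 * v2 - u2 * v1\<bar> = k"
    using ar unfolding par_area_def u1_def u2_def v1_def v2_def by linarith
  hence "k^2 = (u1 * v2 - u2 * v1)^2" by (metis power2_abs)
  moreover have "(u1^2 + u2^2) * (v1^2 + v2^2) = (u1*v1 + u2*v2)^2 + (u1 * v2 - u2 * v1)^2"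
    by (simp add: algebra_simps power2_eq_square)
  ultimately show ?thesis by (intro exI[of _ "u1*v1 + u2*v2"]) simp
qed

lemma sq2: "(2*(c::int))^2 = 4*c^2" by (simp add: power2_eq_square)

lemma bwd:
  fixes x y k m :: int
  assumes "x > 0" "y > 0" "k > 0" "x^2*y^2 - k^2 = m^2"
  shows "\<exists>A B C D. lattice_parallelogram A B C D \<and>
     has_side_lengths A B C D (real_of_int x) (real_of_int y) \<and> par_area A B C D = real_of_int k"
proof -
  obtain u1 u2 v1 v2 where u: "u1^2 + u2^2 = x^2" "v1^2 + v2^2 = y^2" "u1 * v2 - u2 * v1 = k"
    using construct[OF assms(1,2,4)] by blast
  define A :: lpoint where "A = (0, 0)"
  define B :: lpoint where "B = (u1, u2)"
  define C :: lpoint where "C = (u1 + v1, u2 + v2)"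
  define D :: lpoint where "D = (v1, v2)"
  have "lattice_parallelogram A B C D"
    unfolding lattice_parallelogram_def A_def B_def C_def D_def using u(3) assms(3) by simp
  moreover have "seglen A B = x" "seglen B C = y" "seglen C D = x" "seglen D A = y"
    by (rule seglen_of; use u assms in \<open>simp add: A_def B_def C_def D_def power2_commute\<close>)+
  moreover have "par_area A B C D = real_of_int k"
    unfolding par_area_def A_def B_def D_def using u(3) assms(3) by simp
  ultimately show ?thesis unfolding has_side_lengths_def by blast
qed

theorem theorem1:
  fixes x y a b :: int
  assumes "x > 0" "y > 0" "a > 0" "b > 0"
  shows "(\<exists>A B C D E F G H.
            lattice_parallelogram A B C D \<and> lattice_parallelogram E F G H \<and>
            has_side_lengths A B C D (real_of_int x) (real_of_int y) \<and>
            has_side_lengths E F G H (real_of_int a) (real_of_int b) \<and>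
            amicable_par A B C D E F G H)
         \<longleftrightarrow>
         (\<exists>m::int. x^2 * y^2 - 4 * (a + b)^2 = m^2) \<and>
         (\<exists>n::int. a^2 * b^2 - 4 * (x + y)^2 = n^2)"
proof
  assume "\<exists>A B C D E F G H.
            lattice_parallelogram A B C D \<and> lattice_parallelogram E F G H \<and>
            has_side_lengths A B C D (real_of_int x) (real_of_int y) \<and>
            has_side_lengths E F G H (real_of_int a) (real_of_int b) \<and>
            amicable_par A B C D E F G H"
  then obtain A B C D E F G H where h:
    "has_side_lengths A B C D (real_of_int x) (real_of_int y)"
    "has_side_lengths E F G H (real_of_int a) (real_of_int b)"
    "amicable_par A B C D E F G H" by blast
  have "par_area A B C D = real_of_int (2*(a+b))"
    using h(3) perim[OF h(2)] unfolding amicable_par_def by simp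
  from fwd[OF h(1) assms(1,2) this] obtain m where "x^2*y^2 - (2*(a+b))^2 = m^2" by blast
  hence 1: "x^2 * y^2 - 4 * (a + b)^2 = m^2" by (simp only: sq2)
  have "par_area E F G H = real_of_int (2*(x+y))"
    using h(3) perim[OF h(1)] unfolding amicable_par_def by simp
  from fwd[OF h(2) assms(3,4) this] obtain n where "a^2*b^2 - (2*(x+y))^2 = n^2" by blast
  hence 2: "a^2 * b^2 - 4 * (x + y)^2 = n^2" by (simp only: sq2)
  show "(\<exists>m::int. x^2 * y^2 - 4 * (a + b)^2 = m^2) \<and> (\<exists>n::int. a^2 * b^2 - 4 * (x + y)^2 = n^2)"
    using 1 2 by blast
next
  assume "(\<exists>m::int. x^2 * y^2 - 4 * (a + b)^2 = m^2) \<and> (\<exists>n::int. a^2 * b^2 - 4 * (x + y)^2 = n^2)"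
  then obtain m n where mn: "x^2 * y^2 - (2*(a + b))^2 = m^2" "a^2 * b^2 - (2*(x + y))^2 = n^2"
    by (auto simp only: sq2)
  obtain A B C D where 1: "lattice_parallelogram A B C D"
     "has_side_lengths A B C D (real_of_int x) (real_of_int y)" "par_area A B C D = real_of_int (2*(a+b))"
    using bwd[OF assms(1,2) _ mn(1)] assms by auto
  obtain E F G H where 2: "lattice_parallelogram E F G H"
     "has_side_lengths E F G H (real_of_int a) (real_of_int b)" "par_area E F G H = real_of_int (2*(x+y))"
    using bwd[OF assms(3,4) _ mn(2)] assms by auto
  have "amicable_par A B C D E F G H"
    unfolding amicable_par_def using 1 2 perim[OF 1(2)] perim[OF 2(2)] by simp
  thus "\<exists>A B C D E F G H.
            lattice_parallelogram A B C D \<and> lattice_parallelogram E F G H \<and>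
            has_side_lengths A B C D (real_of_int x) (real_of_int y) \<and>
            has_side_lengths E F G H (real_of_int a) (real_of_int b) \<and>
            amicable_par A B C D E F G H" using 1 2 by blast
qed

end
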